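(* Let $[a,b]\subset[0,1]$, $c\in(0,1]$, $K=\{u\in\mathcal C([0,1]): u\ge 0,\ \min_{t\in[a,b]}u(t)\ge c\|u\|\}$ with the supremum norm $\|\cdot\|$. Assume: (H1) $f:[0,1]\times[0,\infty)\to[0,\infty)$ is such that $f(\cdot,u(\cdot))$ is measurable whenever $u\in\mathcal C([0,1])$, and for each $r>0$ there is $R>0$ with $f(t,u)\le R$ for a.a. $t\in[0,1]$ and all $u\in[0,r]$; (H2) $g$ is measurable and $g\ge 0$ a.e.; (H3) $k:[0,1]\times[0,1]\to[0,\infty)$ is continuous; (H4) there is a measurable $\Phi:[0,1]\to[0,\infty)$ with $\Phi g\in L^1(0,1)$, $\int_a^b\Phi g>0$, $k(t,s)\le\Phi(s)$ for all $t,s\in[0,1]$ and $c\Phi(s)\le k(t,s)$ for $t\in[a,b]$, $s\in[0,1]$. Let $T:K\to K$, $Tu(t)=\int_0^1k(t,s)g(s)f(s,u(s))\,ds$, and let $\mathbb T$ be its closed--convex envelope. Suppose that $\{u\}\cap\mathbb{T}u\subset\{Tu\}$ for all $u\in K\cap\mathbb{T}K$, and that there exist $\rho>0$ and $\varepsilon>0$ such that $f^{\rho,\varepsilon}<m$, where $$f^{\rho,\varepsilon}:=\sup_{0\le t\le1,\,0\le u\le\rho+\varepsilon}\frac{f(t,u)}{\rho},\qquad \frac1m:=\sup_{t\in[0,1]}\int_0^1k(t,s)g(s)\,ds.$$ Then $\lambda u\notin\mathbb{T}u$ for all $u\in K$ with $\|u\|=\rho$ and all $\lambda\ge1$.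
   Context: The closed--convex envelope of $T:K\to K$ is the multivalued map $\mathbb{T}u=\bigcap_{\varepsilon>0}\overline{\mathrm{co}}\,T\big(\overline B_\varepsilon(u)\cap K\big)$, where $\overline B_\varepsilon(u)$ is the closed ball in $\mathcal C([0,1])$ and $\overline{\mathrm{co}}$ is closed convex hull; $\mathbb TK=\bigcup_{u\in K}\mathbb Tu$. *)

theory Defs
  imports "HOL-Analysis.Analysis"
begin

text \<open>Convention: C([0,1]) is represented isometrically as the closed linear subspace of
  bounded continuous functions on the reals which are constant outside [0,1]
  (i.e. u t = u (clamp t)).  Sup norm over the reals = sup norm over [0,1].\<close>

definition clamp01 :: "real \<Rightarrow> real" where
  "clamp01 t = max 0 (min 1 t)"

definition C01 :: "(real \<Rightarrow>\<^sub>C real) set" where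
  "C01 = {u. \<forall>t. apply_bcontfun u t = apply_bcontfun u (clamp01 t)}"

definition coneK :: "real \<Rightarrow> real \<Rightarrow> real \<Rightarrow> (real \<Rightarrow>\<^sub>C real) set" where
  "coneK a b c = {u \<in> C01. (\<forall>t\<in>{0..1}. apply_bcontfun u t \<ge> 0)
                      \<and> (INF t\<in>{a..b}. apply_bcontfun u t) \<ge> c * norm u}"

definition hammT :: "(real \<Rightarrow> real \<Rightarrow> real) \<Rightarrow> (real \<Rightarrow> real) \<Rightarrow> (real \<Rightarrow> real \<Rightarrow> real)
                      \<Rightarrow> (real \<Rightarrow>\<^sub>C real) \<Rightarrow> (real \<Rightarrow>\<^sub>C real)" where
  "hammT k g f u = Bcontfun (\<lambda>t. integral\<^sup>L (lebesgue_on {0..1})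
        (\<lambda>s. k (clamp01 t) s * g s * f s (apply_bcontfun u s)))"

definition envelope :: "('a::real_normed_vector \<Rightarrow> 'b::real_normed_vector) \<Rightarrow> 'a set \<Rightarrow> 'a \<Rightarrow> 'b set" where
  "envelope T K u = (\<Inter>\<epsilon>\<in>{0<..}. closure (convex hull (T ` (cball u \<epsilon> \<inter> K))))"

end

theory Submission
  imports Defs
begin

theorem lemma2:
  fixes a b c \<rho> \<epsilon> :: real
    and f :: "real \<Rightarrow> real \<Rightarrow> real" and g \<Phi> :: "real \<Rightarrow> real" and k :: "real \<Rightarrow> real \<Rightarrow> real"
  assumes ab: "0 \<le> a" "a \<le> b" "b \<le> 1"
    and c: "0 < c" "c \<le> 1"
    and H1_nonneg: "\<forall>t\<in>{0..1}. \<forall>x\<ge>0. f t x \<ge> 0"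
    and H1_meas: "\<forall>u. continuous_on {0..1} u \<and> (\<forall>t\<in>{0..1}. u t \<ge> 0) \<longrightarrow>
                    (\<lambda>s. f s (u s)) \<in> borel_measurable (lebesgue_on {0..1})"
    and H1_bound: "\<forall>r>0. \<exists>R>0. AE t in lebesgue_on {0..1}. \<forall>x\<in>{0..r}. f t x \<le> R"
    and H2: "g \<in> borel_measurable (lebesgue_on {0..1})" "AE s in lebesgue_on {0..1}. g s \<ge> 0"
    and H3: "continuous_on ({0..1} \<times> {0..1}) (\<lambda>(t, s). k t s)"
            "\<forall>t\<in>{0..1}. \<forall>s\<in>{0..1}. k t s \<ge> 0"
    and H4: "\<Phi> \<in> borel_measurable (lebesgue_on {0..1})" "\<forall>s\<in>{0..1}. \<Phi> s \<ge> 0"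
            "integrable (lebesgue_on {0..1}) (\<lambda>s. \<Phi> s * g s)"
            "integral\<^sup>L (lebesgue_on {a..b}) (\<lambda>s. \<Phi> s * g s) > 0"
            "\<forall>t\<in>{0..1}. \<forall>s\<in>{0..1}. k t s \<le> \<Phi> s"
            "\<forall>t\<in>{a..b}. \<forall>s\<in>{0..1}. c * \<Phi> s \<le> k t s"
    and TK: "hammT k g f ` coneK a b c \<subseteq> coneK a b c"
    and fixp: "\<forall>u \<in> coneK a b c \<inter> (\<Union>v\<in>coneK a b c. envelope (hammT k g f) (coneK a b c) v).
                 {u} \<inter> envelope (hammT k g f) (coneK a b c) u \<subseteq> {hammT k g f u}"
    and \<rho>: "\<rho> > 0" and \<epsilon>: "\<epsilon> > 0"
    and fbdd: "bdd_above ((\<lambda>(t, x). f t x / \<rho>) ` ({0..1} \<times> {0..\<rho> + \<epsilon>}))"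
    and fsmall: "(SUP (t, x)\<in>{0..1} \<times> {0..\<rho> + \<epsilon>}. f t x / \<rho>)
                   < 1 / (SUP t\<in>{0..1}. integral\<^sup>L (lebesgue_on {0..1}) (\<lambda>s. k t s * g s))"
  shows "\<forall>u\<in>coneK a b c. norm u = \<rho> \<longrightarrow>
           (\<forall>lam\<ge>1. lam *\<^sub>R u \<notin> envelope (hammT k g f) (coneK a b c) u)"
proof -
  let ?L = "lebesgue_on {0..1::real}"
  let ?T = "hammT k g f"
  let ?K = "coneK a b c"
  define M where "M = (SUP t\<in>{0..1}. integral\<^sup>L ?L (\<lambda>s. k t s * g s))"
  define F where "F = (SUP (t, x)\<in>{0..1} \<times> {0..\<rho> + \<epsilon>}. f t x / \<rho>)"
  have cl: "clamp01 t \<in> {0..1}" for t by (auto simp: clamp01_def)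
  have kcont: "continuous_on {0..1} (k t)" if "t \<in> {0..1}" for t
  proof -
    have "continuous_on {0..1} (\<lambda>s. (\<lambda>(t, s). k t s) ((\<lambda>s. (t, s)) s))"
      by (rule continuous_on_compose2[OF H3(1)]) (use that in \<open>auto intro!: continuous_intros\<close>)
    then show ?thesis by simp
  qed
  have kmeas: "k t \<in> borel_measurable ?L" if "t \<in> {0..1}" for t
    using kcont[OF that] by (rule continuous_imp_measurable_on_sets_lebesgue) auto
  have gAE: "AE s in ?L. s \<in> {0..1} \<and> g s \<ge> 0"
  proof -
    have "AE s in ?L. s \<in> {0..1}" by (rule AE_I2) simp
    then show ?thesis using H2(2) by eventually_elim auto
  qed
  have intkg: "integrable ?L (\<lambda>s. k t s * g s)" if "t \<in> {0..1}" for t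
  proof (rule Bochner_Integration.integrable_bound[OF H4(3)])
    show "(\<lambda>s. k t s * g s) \<in> borel_measurable ?L" using kmeas[OF that] H2(1) by measurable
    show "AE s in ?L. norm (k t s * g s) \<le> norm (\<Phi> s * g s)"
      using gAE proof eventually_elim
      case (elim s)
      then show ?case using H3(2) H4(5) H4(2) that by (auto simp: abs_mult intro!: mult_right_mono)
    qed
  qed
  have kg_nonneg: "0 \<le> integral\<^sup>L ?L (\<lambda>s. k t s * g s)" if "t \<in> {0..1}" for t
    using gAE by (intro integral_nonneg_AE, eventually_elim) (use H3(2) that in auto)
  have kg_le: "integral\<^sup>L ?L (\<lambda>s. k t s * g s) \<le> integral\<^sup>L ?L (\<lambda>s. \<Phi> s * g s)" if "t \<in> {0..1}" for t
    using gAE by (intro integral_mono_AE intkg that H4(3), eventually_elim) (use H4(5) that in \<open>auto intro!: mult_right_mono\<close>)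
  have bddM: "bdd_above ((\<lambda>t. integral\<^sup>L ?L (\<lambda>s. k t s * g s)) ` {0..1})"
    using kg_le by (intro bdd_aboveI2) auto
  have leM: "integral\<^sup>L ?L (\<lambda>s. k t s * g s) \<le> M" if "t \<in> {0..1}" for t
    unfolding M_def using bddM that by (rule cSUP_upper2) auto
  have M0: "0 \<le> M" using leM[of 0] kg_nonneg[of 0] by auto
  have leF: "f t x \<le> \<rho> * F" if "t \<in> {0..1}" "x \<in> {0..\<rho>+\<epsilon>}" for t x
  proof -
    have "f t x / \<rho> \<le> F" unfolding F_def using fbdd that
      by (intro cSUP_upper2[where x="(t,x)"]) auto
    then show ?thesis using \<rho> by (simp add: field_simps)
  qed
  have F0: "0 \<le> F" using leF[of 0 0] H1_nonneg \<rho> \<epsilon>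
    by (smt (verit, best) atLeastAtMost_iff mult_nonneg_nonneg zero_le_mult_iff)
  have FM: "F * M < 1"
  proof (cases "M = 0")
    case True
    then show ?thesis using fsmall F0 unfolding M_def F_def by simp
  next
    case False
    then have "M > 0" using M0 by simp
    then show ?thesis using fsmall unfolding M_def[symmetric] F_def[symmetric] by (simp add: field_simps)
  qed
  define r where "r = \<rho> * F * M"
  have r\<rho>: "r < \<rho>" unfolding r_def using FM \<rho> by (simp add: mult.assoc)
  have main: "norm (?T w) \<le> r" if wK: "w \<in> ?K" and wb: "norm w \<le> \<rho> + \<epsilon>" for w
  proof -
    have wC: "w \<in> C01" and wnn: "\<forall>t\<in>{0..1}. 0 \<le> apply_bcontfun w t"
      using wK unfolding coneK_def by auto
    have wle: "apply_bcontfun w s \<le> \<rho> + \<epsilon>" for s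
      using norm_bounded[of w s] wb by simp
    have fw: "0 \<le> f s (apply_bcontfun w s) \<and> f s (apply_bcontfun w s) \<le> \<rho> * F" if "s \<in> {0..1}" for s
      using H1_nonneg leF[of s "apply_bcontfun w s"] wnn wle[of s] that by auto
    have fmeas: "(\<lambda>s. f s (apply_bcontfun w s)) \<in> borel_measurable ?L"
      using H1_meas wnn by auto
    have meas: "(\<lambda>s. k t s * g s * f s (apply_bcontfun w s)) \<in> borel_measurable ?L" if "t \<in> {0..1}" for t
      using kmeas[OF that] H2(1) fmeas by measurable
    have dom: "AE s in ?L. norm (k t s * g s * f s (apply_bcontfun w s)) \<le> \<Phi> s * g s * (\<rho> * F)"
      if "t \<in> {0..1}" for t
      using gAE proof eventually_elim
      case (elim s)
      then have "0 \<le> k t s" "k t s \<le> \<Phi> s" using H3(2) H4(5) that by auto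
      then show ?case using fw[of s] elim
        by (auto simp: abs_mult intro!: mult_mono)
    qed
    have intPhi: "integrable ?L (\<lambda>s. \<Phi> s * g s * (\<rho> * F))" using H4(3) by simp
    have integ: "integrable ?L (\<lambda>s. k t s * g s * f s (apply_bcontfun w s))" if "t \<in> {0..1}" for t
      by (rule Bochner_Integration.integrable_bound[OF intPhi meas[OF that]])
         (use dom[OF that] in \<open>auto elim!: eventually_mono\<close>)
    define h where "h t = integral\<^sup>L ?L (\<lambda>s. k (clamp01 t) s * g s * f s (apply_bcontfun w s))" for t
    have hb: "norm (h t) \<le> r" for t
    proof -
      have "0 \<le> h t" unfolding h_def
        using gAE by (intro integral_nonneg_AE, eventually_elim) (use H3(2) cl fw in auto)
      moreover have "h t \<le> integral\<^sup>L ?L (\<lambda>s. k (clamp01 t) s * g s * (\<rho> * F))" unfolding h_def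
        using gAE by (intro integral_mono_AE integ cl integrable_mult_left intkg, eventually_elim)
          (use H3(2) cl fw in \<open>auto intro!: mult_left_mono\<close>)
      moreover have "integral\<^sup>L ?L (\<lambda>s. k (clamp01 t) s * g s * (\<rho> * F)) \<le> M * (\<rho> * F)"
        using leM[OF cl] F0 \<rho> by (simp add: mult_right_mono)
      ultimately show ?thesis unfolding r_def by (simp add: mult_ac)
    qed
    have hc: "continuous_on UNIV h"
    proof (rule continuous_on_sequentiallyI)
      fix x :: "nat \<Rightarrow> real" and a assume x: "x \<longlonglongrightarrow> a"
      have kc: "continuous_on UNIV (\<lambda>t. k (clamp01 t) s)" if "s \<in> {0..1}" for s
      proof -
        have "continuous_on UNIV (\<lambda>t. (\<lambda>(t, s). k t s) ((\<lambda>t. (clamp01 t, s)) t))"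
          by (rule continuous_on_compose2[OF H3(1)])
            (use that cl in \<open>auto simp: clamp01_def intro!: continuous_intros\<close>)
        then show ?thesis by simp
      qed
      show "(\<lambda>n. h (x n)) \<longlonglongrightarrow> h a" unfolding h_def
      proof (rule integral_dominated_convergence[OF meas[OF cl] meas[OF cl] intPhi])
        show "AE s in ?L. (\<lambda>n. k (clamp01 (x n)) s * g s * f s (apply_bcontfun w s))
                \<longlonglongrightarrow> k (clamp01 a) s * g s * f s (apply_bcontfun w s)"
        proof (rule AE_I2)
          fix s assume "s \<in> space ?L"
          then have "s \<in> {0..1}" by simp
          then have "isCont (\<lambda>t. k (clamp01 t) s) a" using kc continuous_on_eq_continuous_at by blast
          then have "(\<lambda>n. k (clamp01 (x n)) s) \<longlonglongrightarrow> k (clamp01 a) s"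
            using x isCont_tendsto_compose by blast
          then show "(\<lambda>n. k (clamp01 (x n)) s * g s * f s (apply_bcontfun w s))
                \<longlonglongrightarrow> k (clamp01 a) s * g s * f s (apply_bcontfun w s)"
            by (intro tendsto_intros)
        qed
        show "AE s in ?L. norm (k (clamp01 (x n)) s * g s * f s (apply_bcontfun w s)) \<le> \<Phi> s * g s * (\<rho> * F)" for n
          by (rule dom[OF cl])
      qed
    qed
    have hB: "h \<in> bcontfun" using hc hb by (rule bcontfun_normI)
    have "hammT k g f w = Bcontfun h" unfolding hammT_def h_def by simp
    then have "apply_bcontfun (?T w) = h" using hB by (simp add: Bcontfun_inverse)
    then show ?thesis using hb by (intro norm_bound) simp
  qed
  show ?thesis
  proof (intro ballI impI allI notI)
    fix u lam assume uK: "u \<in> ?K" and nu: "norm u = \<rho>" and lam: "lam \<ge> 1"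
      and mem: "lam *\<^sub>R u \<in> envelope ?T ?K u"
    have mem2: "lam *\<^sub>R u \<in> closure (convex hull (?T ` (cball u \<epsilon> \<inter> ?K)))"
      using mem \<epsilon> unfolding envelope_def by auto
    have sub: "?T ` (cball u \<epsilon> \<inter> ?K) \<subseteq> cball 0 r"
    proof
      fix y assume "y \<in> ?T ` (cball u \<epsilon> \<inter> ?K)"
      then obtain w where w: "w \<in> cball u \<epsilon>" "w \<in> ?K" and y: "y = ?T w" by auto
      have "norm w \<le> norm u + dist u w" by (metis dist_norm norm_triangle_sub add.commute norm_minus_commute)
      then have "norm w \<le> \<rho> + \<epsilon>" using w nu by auto
      then show "y \<in> cball 0 r" using main[OF w(2)] y by simp
    qed
    have "convex hull (?T ` (cball u \<epsilon> \<inter> ?K)) \<subseteq> cball 0 r"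
      using sub by (simp add: hull_minimal convex_cball)
    then have "closure (convex hull (?T ` (cball u \<epsilon> \<inter> ?K))) \<subseteq> cball 0 r"
      by (rule closure_minimal) simp
    then have "norm (lam *\<^sub>R u) \<le> r" using mem2 by auto
    moreover have "norm (lam *\<^sub>R u) \<ge> \<rho>" using lam nu \<rho> by simp
    ultimately show False using r\<rho> by simp
  qed
qed

end
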